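(* Let $H\in\mathbb{R}^{n\times n}$ be symmetric with $\lambda_1:=\lambda_{\min}(H)<0$ and unit eigenvector $v_1$, and let $g\in\mathbb{R}^n$ with $g^{(1)}:=g^\intercal v_1\neq 0$. For $a\in\mathbb{R}^n$ write $a^{(1)}=a^\intercal v_1$. Let $\eta>0$ and $z_0=-\alpha\frac{g}{\|g\|}$ with $0<\alpha<1$, and consider the phase I iteration $z_{t+1}=z_t-\eta(Hz_t+g)$ of Algorithm 1. Then phase I terminates, i.e. there is an index $T_1\ge 0$ with $\|z_t\|<1$ for all $t\le T_1$ and $\|z_{T_1+1}\|\ge 1$, and $$T_1\le \frac{1}{\log(1-\eta\lambda_1)}\Big[\log\Big(\frac{1}{\eta|g^{(1)}|}-\frac{1}{\eta\lambda_1}\Big)-\log\Big(\frac{-z_0^{(1)}}{\eta g^{(1)}}-\frac{1}{\eta\lambda_1}\Big)\Big].$$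
   Context: Algorithm 1 solves $\min_{\|z\|_2\le1}\frac12 z^\intercal Hz+g^\intercal z$; its phase I starts from $z_0$ and performs plain gradient steps $z_{t+1}=z_t-\eta(Hz_t+g)$ while $\|z_t\|<1$; $T_1$ denotes the number of phase I iterations as specified in the claim. *)

theory Defs
  imports "HOL-Analysis.Analysis"
begin

fun phaseI_iter :: "real^'n^'n \<Rightarrow> real^'n \<Rightarrow> real \<Rightarrow> real^'n \<Rightarrow> nat \<Rightarrow> real^'n" where
  "phaseI_iter H g eta z0 0 = z0"
| "phaseI_iter H g eta z0 (Suc t) =
     phaseI_iter H g eta z0 t - eta *\<^sub>R (H *v phaseI_iter H g eta z0 t + g)"

definition is_min_eigenvalue :: "real^'n^'n \<Rightarrow> real \<Rightarrow> bool" where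
  "is_min_eigenvalue H lam \<longleftrightarrow>
     (\<exists>v. v \<noteq> 0 \<and> H *v v = lam *\<^sub>R v) \<and>
     (\<forall>mu v. v \<noteq> 0 \<and> H *v v = mu *\<^sub>R v \<longrightarrow> lam \<le> mu)"

end

theory Submission
  imports Defs
begin

theorem lemma2:
  fixes H :: "real^'n^'n" and g v1 :: "real^'n" and lam1 eta alpha :: real
  assumes symH: "transpose H = H"
    and lmin: "is_min_eigenvalue H lam1"
    and lneg: "lam1 < 0"
    and v1_eig: "H *v v1 = lam1 *\<^sub>R v1"
    and v1_unit: "norm v1 = 1"
    and g1: "g \<bullet> v1 \<noteq> 0"
    and eta: "eta > 0"
    and alpha: "0 < alpha" "alpha < 1"
  shows "\<exists>T1::nat.
     (\<forall>t\<le>T1. norm (phaseI_iter H g eta (- (alpha / norm g) *\<^sub>R g) t) < 1)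
   \<and> norm (phaseI_iter H g eta (- (alpha / norm g) *\<^sub>R g) (T1 + 1)) \<ge> 1
   \<and> real T1 \<le> (1 / ln (1 - eta * lam1)) *
        (ln (1 / (eta * \<bar>g \<bullet> v1\<bar>) - 1 / (eta * lam1))
         - ln (- ((- (alpha / norm g) *\<^sub>R g) \<bullet> v1) / (eta * (g \<bullet> v1)) - 1 / (eta * lam1)))"
proof -
  define z0 where "z0 = - (alpha / norm g) *\<^sub>R g"
  define z where "z = phaseI_iter H g eta z0"
  define G where "G = g \<bullet> v1"
  define q where "q = 1 - eta * lam1"
  define A where "A = alpha / norm g - 1 / lam1"
  define B where "B = 1 / \<bar>G\<bar> - 1 / lam1"
  define c where "c t = z t \<bullet> v1" for t
  have gnz: "g \<noteq> 0" using g1 by auto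
  have ng: "norm g > 0" using gnz by simp
  have Gpos: "\<bar>G\<bar> > 0" using g1 G_def by simp
  have q1: "q > 1" using q_def eta lneg by (simp add: mult_pos_neg)
  have lamterm: "- 1 / lam1 > 0" using lneg by (simp add: divide_neg_neg)
  have ap: "alpha / norm g > 0" using alpha ng by simp
  have lt2: "1 / lam1 < 0" using lneg by simp
  have Apos: "A > 0" unfolding A_def using ap lt2 by linarith
  have Hdot: "(H *v x) \<bullet> v1 = lam1 * (x \<bullet> v1)" for x
  proof -
    have "(H *v x) \<bullet> v1 = v1 \<bullet> (H *v x)" by (simp add: inner_commute)
    also have "\<dots> = (v1 v* H) \<bullet> x" by (metis dot_lmul_matrix)
    also have "v1 v* H = transpose H *v v1" by simp
    also have "\<dots> = lam1 *\<^sub>R v1" using symH v1_eig by simp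
    finally show ?thesis by (simp add: inner_commute)
  qed
  have c0: "c 0 = - alpha * G / norm g" unfolding c_def z_def z0_def G_def by simp
  have crec: "c (Suc t) = q * c t - eta * G" for t
    unfolding c_def z_def q_def G_def
    by (simp add: inner_diff_left inner_add_left Hdot algebra_simps)
  have cform: "c t = G / lam1 * (-1) + q ^ t * (- G * A)" for t
  proof (induction t)
    case 0 show ?case using c0 lneg by (simp add: A_def field_simps)
  next
    case (Suc t)
    have "c (Suc t) = q * (G / lam1 * (-1) + q ^ t * (- G * A)) - eta * G"
      using Suc crec[of t] by simp
    also have "\<dots> = G / lam1 * (-1) + q ^ Suc t * (- G * A)"
      using lneg unfolding q_def by (simp add: field_simps)
    finally show ?case .
  qed
  have cbound: "\<bar>c t\<bar> \<ge> \<bar>G\<bar> * (q ^ t * A + 1 / lam1)" for t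
  proof -
    have "\<bar>c t\<bar> \<ge> \<bar>q ^ t * (- G * A)\<bar> - \<bar>G / lam1\<bar>"
      using cform[of t] by linarith
    moreover have "\<bar>q ^ t * (- G * A)\<bar> = \<bar>G\<bar> * (q ^ t * A)"
      using q1 Apos by (simp add: abs_mult)
    moreover have "\<bar>G / lam1\<bar> = \<bar>G\<bar> * (- 1 / lam1)"
      using lneg by (simp add: abs_div abs_of_neg)
    ultimately show ?thesis by (simp add: algebra_simps)
  qed
  have normc: "norm (z t) \<ge> \<bar>c t\<bar>" for t
    using Cauchy_Schwarz_ineq2[of "z t" v1] v1_unit unfolding c_def by simp
  obtain N where N0: "B / A < q ^ N" using real_arch_pow[OF q1] by blast
  have N: "q ^ N * A > B" using N0 Apos by (simp add: pos_divide_less_eq)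
  have zN: "norm (z N) \<ge> 1"
  proof -
    have "\<bar>G\<bar> * (q ^ N * A + 1 / lam1) \<ge> \<bar>G\<bar> * (B + 1 / lam1)"
      using N Gpos by simp
    moreover have "\<bar>G\<bar> * (B + 1 / lam1) = 1" using Gpos B_def by simp
    ultimately show ?thesis using cbound[of N] normc[of N] by linarith
  qed
  define S where "S = (LEAST t. norm (z t) \<ge> 1)"
  have S1: "norm (z S) \<ge> 1" using zN S_def by (meson LeastI)
  have Smin: "t < S \<Longrightarrow> norm (z t) < 1" for t using S_def not_less_Least[of t "\<lambda>t. norm (z t) \<ge> 1"] by simp
  have nz0: "norm (z 0) < 1" using z_def z0_def alpha ng by simp
  have Spos: "S > 0" using S1 nz0 by (cases S) auto
  define T where "T = S - 1"
  have TS: "T + 1 = S" using Spos T_def by simp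
  have lt: "\<forall>t\<le>T. norm (z t) < 1" using Smin TS by auto
  have qT: "q ^ T * A < B"
  proof -
    have "\<bar>G\<bar> * (q ^ T * A + 1 / lam1) < 1" using cbound[of T] normc[of T] lt[rule_format, of T] by linarith
    hence "q ^ T * A + 1 / lam1 < 1 / \<bar>G\<bar>" using Gpos by (simp add: field_simps)
    thus ?thesis using B_def by simp
  qed
  have Bpos: "B > 0" using qT Apos q1 by (smt (verit) mult_pos_pos zero_less_power)
  have lnq: "ln q > 0" using q1 by simp
  have "real T * ln q = ln (q ^ T)" using q1 by (simp add: ln_realpow)
  also have "\<dots> \<le> ln (B / A)" proof -
    have "q ^ T < B / A" using qT Apos by (simp add: pos_less_divide_eq)
    moreover have "q ^ T > 0" using q1 by simp
    ultimately show ?thesis by simp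
  qed
  also have "\<dots> = ln B - ln A" using Apos Bpos by (simp add: ln_div)
  finally have Tb: "real T \<le> (ln B - ln A) / ln q" using lnq by (simp add: pos_le_divide_eq)
  have e1: "1 / (eta * \<bar>g \<bullet> v1\<bar>) - 1 / (eta * lam1) = B / eta"
    using eta B_def G_def by (simp add: field_simps)
  have e2: "- ((- (alpha / norm g) *\<^sub>R g) \<bullet> v1) / (eta * (g \<bullet> v1)) - 1 / (eta * lam1) = A / eta"
    using eta A_def G_def g1 by (simp add: field_simps)
  have "(1 / ln (1 - eta * lam1)) * (ln (B / eta) - ln (A / eta)) = (ln B - ln A) / ln q"
    using eta Apos Bpos q_def by (simp add: ln_div)
  hence "real T \<le> (1 / ln (1 - eta * lam1)) *
        (ln (1 / (eta * \<bar>g \<bullet> v1\<bar>) - 1 / (eta * lam1))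
         - ln (- ((- (alpha / norm g) *\<^sub>R g) \<bullet> v1) / (eta * (g \<bullet> v1)) - 1 / (eta * lam1)))"
    using Tb e1 e2 by simp
  thus ?thesis using lt S1 TS unfolding z_def z0_def by metis
qed

end
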